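(* Let $k$ and $s$ be integers with $1\leq s\leq k$, and let $G$ be a connected cograph on at least $k+s+2$ vertices that has no $k$-dense $(k+s+2)$-set. Then there exists a set $L$ of vertices of $G$ with $1\leq |L|\leq s$ such that every vertex of $L$ is adjacent to every vertex of $V(G)\setminus L$.
   Context: All graphs are finite and simple. For a graph $G$ and a nonnegative integer $k$, a $k$-sparse set is a set of vertices inducing a subgraph of maximum degree at most $k$; a $k$-dense $i$-set is a set of $i$ vertices of $G$ that is $k$-sparse in the complement of $G$. A cograph is a graph containing no induced path on four vertices (equivalently, the complement of every connected induced subgraph on at least two vertices is disconnected). *)

theory Defs
  imports Main
begin

definition simple_graph :: "'a set \<Rightarrow> ('a \<Rightarrow> 'a \<Rightarrow> bool) \<Rightarrow> bool" where
  "simple_graph V E \<longleftrightarrow> finite V \<and> (\<forall>u v. E u v \<longrightarrow> u \<in> V \<and> v \<in> V)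
     \<and> (\<forall>u v. E u v \<longrightarrow> E v u) \<and> (\<forall>v. \<not> E v v)"

definition connected_graph :: "'a set \<Rightarrow> ('a \<Rightarrow> 'a \<Rightarrow> bool) \<Rightarrow> bool" where
  "connected_graph V E \<longleftrightarrow> (\<forall>u\<in>V. \<forall>v\<in>V. (\<lambda>x y. x \<in> V \<and> y \<in> V \<and> E x y)\<^sup>*\<^sup>* u v)"

definition cograph :: "'a set \<Rightarrow> ('a \<Rightarrow> 'a \<Rightarrow> bool) \<Rightarrow> bool" where
  "cograph V E \<longleftrightarrow> \<not> (\<exists>a\<in>V. \<exists>b\<in>V. \<exists>c\<in>V. \<exists>d\<in>V. distinct [a,b,c,d] \<and>
      E a b \<and> E b c \<and> E c d \<and> \<not> E a c \<and> \<not> E b d \<and> \<not> E a d)"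

definition compl_graph :: "'a set \<Rightarrow> ('a \<Rightarrow> 'a \<Rightarrow> bool) \<Rightarrow> 'a \<Rightarrow> 'a \<Rightarrow> bool" where
  "compl_graph V E u v \<longleftrightarrow> u \<in> V \<and> v \<in> V \<and> u \<noteq> v \<and> \<not> E u v"

definition k_sparse :: "'a set \<Rightarrow> ('a \<Rightarrow> 'a \<Rightarrow> bool) \<Rightarrow> nat \<Rightarrow> 'a set \<Rightarrow> bool" where
  "k_sparse V E k S \<longleftrightarrow> S \<subseteq> V \<and> (\<forall>v\<in>S. card {u\<in>S. E v u} \<le> k)"

definition k_dense_set :: "'a set \<Rightarrow> ('a \<Rightarrow> 'a \<Rightarrow> bool) \<Rightarrow> nat \<Rightarrow> nat \<Rightarrow> 'a set \<Rightarrow> bool" where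
  "k_dense_set V E k i S \<longleftrightarrow> card S = i \<and> k_sparse V (compl_graph V E) k S"

end

theory Submission imports Defs begin

lemma exit_lemma:
  assumes "r\<^sup>*\<^sup>* x z" "x \<in> A" "z \<notin> A"
  shows "\<exists>p q. r\<^sup>*\<^sup>* x p \<and> p \<in> A \<and> q \<notin> A \<and> r p q"
  using assms
proof (induction rule: rtranclp_induct)
  case base then show ?case by simp
next
  case (step y z)
  show ?case
  proof (cases "y \<in> A")
    case True then show ?thesis using step by blast
  next
    case False
    then obtain p q where "r\<^sup>*\<^sup>* x p" "p \<in> A" "q \<notin> A" "r p q" using step by blast
    then show ?thesis by blast
  qed
qed

lemma isolated_disconn:
  assumes "v \<in> V" "u \<in> V" "u \<noteq> v" "\<forall>q\<in>V. q \<noteq> v \<longrightarrow> \<not> S v q"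
  shows "\<not> connected_graph V S"
proof
  assume "connected_graph V S"
  then have "(\<lambda>x y. x \<in> V \<and> y \<in> V \<and> S x y)\<^sup>*\<^sup>* v u" using assms unfolding connected_graph_def by blast
  from exit_lemma[OF this, of "{v}"] assms obtain p q where "p = v" "q \<noteq> v" "q \<in> V" "S p q" by auto
  then show False using assms by auto
qed

lemma cographD:
  assumes "cograph V R" "a \<in> V" "b \<in> V" "c \<in> V" "d \<in> V" "distinct [a,b,c,d]"
    "R a b" "R b c" "R c d" "\<not> R a c" "\<not> R b d" "\<not> R a d"
  shows False
proof -
  have "\<exists>a\<in>V. \<exists>b\<in>V. \<exists>c\<in>V. \<exists>d\<in>V. distinct [a,b,c,d] \<and>
      R a b \<and> R b c \<and> R c d \<and> \<not> R a c \<and> \<not> R b d \<and> \<not> R a d"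
    apply (rule bexI[OF _ assms(2)], rule bexI[OF _ assms(3)], rule bexI[OF _ assms(4)], rule bexI[OF _ assms(5)])
    using assms(6-12) by blast
  then show False using assms(1) unfolding cograph_def by blast
qed

lemma cograph_compl:
  assumes "cograph V R" and sym: "\<And>x y. R x y \<Longrightarrow> R y x"
  shows "cograph V (compl_graph V R)"
  unfolding cograph_def
proof (intro notI, elim bexE conjE)
  fix a b c d assume h: "a \<in> V" "b \<in> V" "c \<in> V" "d \<in> V" "distinct [a,b,c,d]"
    "compl_graph V R a b" "compl_graph V R b c" "compl_graph V R c d"
    "\<not> compl_graph V R a c" "\<not> compl_graph V R b d" "\<not> compl_graph V R a d"
  then have "R a c" "R a d" "R b d" "\<not> R c d" "\<not> R a b" "\<not> R b c" "distinct [c,a,d,b]"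
    unfolding compl_graph_def by auto
  then have "R c a" "R a d" "R d b" "\<not> R c d" "\<not> R a b" "\<not> R c b" "distinct [c,a,d,b]"
    using sym by blast+
  then show False using cographD[OF assms(1) h(3) h(1) h(4) h(2)] by blast
qed

lemma cograph_sub: "cograph V R \<Longrightarrow> V' \<subseteq> V \<Longrightarrow> cograph V' R"
  unfolding cograph_def by blast

lemma conn_compl_sub:
  assumes "V' \<subseteq> V"
  shows "connected_graph V' (compl_graph V R) = connected_graph V' (compl_graph V' R)"
proof -
  have "(\<lambda>x y. x \<in> V' \<and> y \<in> V' \<and> compl_graph V R x y) = (\<lambda>x y. x \<in> V' \<and> y \<in> V' \<and> compl_graph V' R x y)"
    using assms by (auto simp: compl_graph_def fun_eq_iff)
  then show ?thesis unfolding connected_graph_def by simp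
qed

lemma keyK:
  assumes sym: "\<And>x y. R x y \<Longrightarrow> R y x" and irr: "\<And>x. \<not> R x x"
    and cg: "cograph V R" and v: "v \<in> V" and conn: "connected_graph V R"
    and disc: "\<not> connected_graph (V - {v}) R"
    and u: "u \<in> V - {v}" and nuv: "\<not> R v u"
  shows False
proof -
  define V' where "V' = V - {v}"
  define Q where "Q = (\<lambda>x y. x \<in> V' \<and> y \<in> V' \<and> R x y)"
  define P where "P = (\<lambda>x y. x \<in> V \<and> y \<in> V \<and> R x y)"
  have Qsym: "Q\<^sup>*\<^sup>* y x" if "Q\<^sup>*\<^sup>* x y" for x y
    using that
  proof (induction rule: rtranclp_induct)
    case base then show ?case by simp
  next
    case (step y z)
    have "Q z y" using step(2) sym unfolding Q_def by blast
    then show ?case using step(3) by (meson converse_rtranclp_into_rtranclp)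
  qed
  from disc obtain a b where ab: "a \<in> V'" "b \<in> V'" "\<not> Q\<^sup>*\<^sup>* a b"
    unfolding connected_graph_def V'_def Q_def by blast
  define C where "C = {x \<in> V'. Q\<^sup>*\<^sup>* u x}"
  have uC: "u \<in> C" using u unfolding C_def V'_def by simp
  have "\<exists>w\<in>V'. w \<notin> C"
  proof (rule ccontr)
    assume "\<not> ?thesis"
    then have "Q\<^sup>*\<^sup>* u a" "Q\<^sup>*\<^sup>* u b" using ab unfolding C_def by auto
    then have "Q\<^sup>*\<^sup>* a b" using Qsym by (meson rtranclp_trans)
    then show False using ab by simp
  qed
  then obtain w where w: "w \<in> V'" "w \<notin> C" by blast
  have Cclosed: "z \<in> C" if "x \<in> C" "z \<in> V'" "R x z" for x z
  proof -
    have xV: "x \<in> V'" and ux: "Q\<^sup>*\<^sup>* u x" using that(1) unfolding C_def by blast+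
    have "Q x z" unfolding Q_def using xV that(2,3) by blast
    then have "Q\<^sup>*\<^sup>* u z" using ux by (rule rtranclp.rtrancl_into_rtrancl[rotated])
    then show ?thesis using that(2) unfolding C_def by blast
  qed
  have "P\<^sup>*\<^sup>* u w" using conn u w unfolding connected_graph_def P_def V'_def by auto
  from exit_lemma[OF this uC w(2)] obtain p q where pq: "p \<in> C" "q \<notin> C" "P p q" by blast
  have "q = v"
  proof (rule ccontr)
    assume "q \<noteq> v"
    then have "q \<in> V'" using pq unfolding P_def V'_def by auto
    then show False using Cclosed pq unfolding P_def by blast
  qed
  then have y: "p \<in> C" "R p v" using pq unfolding P_def by auto
  have "P\<^sup>*\<^sup>* w v" using conn v w unfolding connected_graph_def P_def V'_def by auto
  have wVC: "w \<in> V' - C" using w by blast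
  have vVC: "v \<notin> V' - C" unfolding V'_def by blast
  from exit_lemma[OF \<open>P\<^sup>*\<^sup>* w v\<close> wVC vVC] obtain p' q' where pq': "p' \<in> V' - C" "q' \<notin> V' - C" "P p' q'" by blast
  have "q' = v"
  proof (rule ccontr)
    assume "q' \<noteq> v"
    then have "q' \<in> C" using pq' unfolding P_def V'_def by auto
    moreover have "p' \<in> V'" using pq' by blast
    moreover have "R q' p'" using pq' sym unfolding P_def by blast
    ultimately have "p' \<in> C" by (rule Cclosed)
    then show False using pq' by simp
  qed
  then have w': "p' \<in> V'" "p' \<notin> C" "R p' v" using pq' unfolding P_def by auto
  have "Q\<^sup>*\<^sup>* u p" using y unfolding C_def by simp
  from exit_lemma[OF this, of "{t. \<not> R t v}"] nuv sym y obtain z x where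
    zx: "Q\<^sup>*\<^sup>* u z" "\<not> R z v" "R x v" "Q z x" by blast
  have zC: "z \<in> C" "x \<in> C" using zx unfolding C_def Q_def
    by (auto intro: rtranclp.rtrancl_into_rtrancl)
  have nzw: "\<not> R z p'" "\<not> R x p'" using Cclosed zC w' by blast+
  have "distinct [z, x, v, p']"
    using zC w' zx irr unfolding C_def V'_def Q_def by auto
  moreover have "z \<in> V" "x \<in> V" "p' \<in> V" using zC w' unfolding C_def V'_def by auto
  moreover have "R x v" "R v p'" using zx w' sym by blast+
  ultimately show False using cographD[OF cg, of z x v p'] v zx nzw unfolding Q_def by blast
qed

lemma mainM:
  assumes "finite V" "card V \<ge> 2" "\<And>x y. R x y \<Longrightarrow> R y x" "\<And>x. \<not> R x x"
    "cograph V R" "connected_graph V R" "connected_graph V (compl_graph V R)"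
  shows False
  using assms
proof (induction "card V" arbitrary: V rule: less_induct)
  case less
  note sym = less.prems(3) and irr = less.prems(4)
  from less.prems(2) obtain v where v: "v \<in> V" by fastforce
  define V' where "V' = V - {v}"
  have cV': "card V' = card V - 1" unfolding V'_def using v less.prems(1) by simp
  have csym: "\<And>x y. compl_graph V R x y \<Longrightarrow> compl_graph V R y x" using sym unfolding compl_graph_def by blast
  have cirr: "\<And>x. \<not> compl_graph V R x x" unfolding compl_graph_def by blast
  have ccg: "cograph V (compl_graph V R)" using cograph_compl[OF less.prems(5) sym] .
  show False
  proof (cases "card V' \<ge> 2")
    case False
    then have "card V' = 1" using cV' less.prems(2) by linarith
    then obtain u where u: "V' = {u}" using card_1_singletonE by blast
    then have uV: "u \<in> V" "u \<noteq> v" unfolding V'_def by auto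
    show False
    proof (cases "R v u")
      case True
      have "\<forall>q\<in>V. q \<noteq> v \<longrightarrow> \<not> compl_graph V R v q"
      proof (intro ballI impI)
        fix q assume "q \<in> V" "q \<noteq> v"
        then have "q = u" using u unfolding V'_def by blast
        then show "\<not> compl_graph V R v q" using True unfolding compl_graph_def by blast
      qed
      then show False using isolated_disconn[OF v uV(1) uV(2)] less.prems(7) by blast
    next
      case False
      have "\<forall>q\<in>V. q \<noteq> v \<longrightarrow> \<not> R v q"
      proof (intro ballI impI)
        fix q assume "q \<in> V" "q \<noteq> v"
        then have "q = u" using u unfolding V'_def by blast
        then show "\<not> R v q" using False by blast
      qed
      then show False using isolated_disconn[OF v uV(1) uV(2)] less.prems(6) by blast
    qed
  next
    case True
    obtain u0 where u0: "u0 \<in> V'" using True by fastforce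
    then have u0V: "u0 \<in> V" "u0 \<noteq> v" unfolding V'_def by auto
    have lt: "card V' < card V" using cV' less.prems(2) by linarith
    have "V' \<subseteq> V" unfolding V'_def by blast
    have IH: "\<not> (connected_graph V' R \<and> connected_graph V' (compl_graph V' R))"
      using less.hyps[OF lt _ True sym irr cograph_sub[OF less.prems(5) \<open>V' \<subseteq> V\<close>]]
        less.prems(1) unfolding V'_def by auto
    show False
    proof (cases "connected_graph V' R")
      case False
      show False
      proof (cases "\<exists>u\<in>V'. \<not> R v u")
        case True
        then obtain u where "u \<in> V - {v}" "\<not> R v u" unfolding V'_def by blast
        then show False using keyK[OF sym irr less.prems(5) v less.prems(6) _ ] False
          unfolding V'_def by blast
      next
        case False
        have "\<forall>q\<in>V. q \<noteq> v \<longrightarrow> \<not> compl_graph V R v q"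
          using False unfolding compl_graph_def V'_def by blast
        then show False using isolated_disconn[OF v u0V] less.prems(7) by blast
      qed
    next
      case True
      then have nc: "\<not> connected_graph V' (compl_graph V R)" using IH conn_compl_sub[OF \<open>V' \<subseteq> V\<close>] by blast
      show False
      proof (cases "\<exists>u\<in>V'. R v u")
        case True
        then obtain u where u: "u \<in> V - {v}" "R v u" unfolding V'_def by blast
        then have "\<not> compl_graph V R v u" unfolding compl_graph_def by blast
        then show False using keyK[OF csym cirr ccg v less.prems(7) _ u(1)] nc
          unfolding V'_def by blast
      next
        case False
        have "\<forall>q\<in>V. q \<noteq> v \<longrightarrow> \<not> R v q"
          using False unfolding V'_def by blast
        then show False using isolated_disconn[OF v u0V] less.prems(6) by blast
      qed
    qed
  qed
qed

theorem lemma7p1: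
  fixes V :: "'a set" and E :: "'a \<Rightarrow> 'a \<Rightarrow> bool" and k s :: nat
  assumes "simple_graph V E"
    and "1 \<le> s" and "s \<le> k"
    and "connected_graph V E" and "cograph V E"
    and "card V \<ge> k + s + 2"
    and "\<not> (\<exists>S. k_dense_set V E k (k + s + 2) S)"
  shows "\<exists>L. L \<subseteq> V \<and> 1 \<le> card L \<and> card L \<le> s \<and> (\<forall>u\<in>L. \<forall>v\<in>V - L. E u v)"
proof -
  have sg: "finite V \<and> (\<forall>u v. E u v \<longrightarrow> u \<in> V \<and> v \<in> V) \<and> (\<forall>u v. E u v \<longrightarrow> E v u) \<and> (\<forall>v. \<not> E v v)"
    using assms(1) unfolding simple_graph_def .
  have fin: "finite V" using sg by (rule conjunct1)
  have sym: "\<And>x y. E x y \<Longrightarrow> E y x" using sg by simp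
  have irr: "\<And>x. \<not> E x x" using sg by simp
  have c2: "card V \<ge> 2" using assms(6) by linarith
  have "\<not> connected_graph V (compl_graph V E)"
    using mainM[OF fin c2 sym irr assms(5) assms(4)] by blast
  then obtain a b where ab: "a \<in> V" "b \<in> V"
    "\<not> (\<lambda>x y. x \<in> V \<and> y \<in> V \<and> compl_graph V E x y)\<^sup>*\<^sup>* a b"
    unfolding connected_graph_def by blast
  define Q where "Q = (\<lambda>x y. x \<in> V \<and> y \<in> V \<and> compl_graph V E x y)"
  define L where "L = {x \<in> V. Q\<^sup>*\<^sup>* a x}"
  have aL: "a \<in> L" unfolding L_def using ab by simp
  have bL: "b \<notin> L" unfolding L_def Q_def using ab by simp
  have LV: "L \<subseteq> V" unfolding L_def by blast
  have join: "E u w" if "u \<in> L" "w \<in> V - L" for u w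
  proof (rule ccontr)
    assume "\<not> E u w"
    moreover have "u \<noteq> w" "u \<in> V" "w \<in> V" using that LV by blast+
    ultimately have "Q u w" unfolding Q_def compl_graph_def by blast
    moreover have "Q\<^sup>*\<^sup>* a u" using that(1) unfolding L_def by blast
    ultimately have "Q\<^sup>*\<^sup>* a w" by (rule rtranclp.rtrancl_into_rtrancl[rotated])
    then show False using that \<open>w \<in> V\<close> unfolding L_def by blast
  qed
  have finL: "finite L" "finite (V - L)" using fin LV finite_subset by blast+
  have "L \<noteq> {}" using aL by blast
  then have cL: "card L \<ge> 1" using finL(1) by (simp add: Suc_le_eq card_gt_0_iff)
  have "V - L \<noteq> {}" using bL ab by blast
  then have cM: "card (V - L) \<ge> 1" using finL(2) by (simp add: Suc_le_eq card_gt_0_iff)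
  have csum: "card L + card (V - L) = card V"
  proof -
    have "card L \<le> card V" using card_mono[OF fin LV] .
    moreover have "card (V - L) = card V - card L" using card_Diff_subset[OF finL(1) LV] .
    ultimately show ?thesis by linarith
  qed
  show ?thesis
  proof (cases "card L \<le> s")
    case True then show ?thesis using LV cL join by blast
  next
    case F1: False
    show ?thesis
    proof (cases "card (V - L) \<le> s")
      case True
      have "\<forall>u\<in>V - L. \<forall>v\<in>V - (V - L). E u v"
      proof (intro ballI)
        fix u v assume "u \<in> V - L" "v \<in> V - (V - L)"
        then have "E v u" using join by blast
        then show "E u v" by (rule sym)
      qed
      then show ?thesis using True cM by blast
    next
      case F2: False
      obtain A where A: "A \<subseteq> L" "card A = min (card L) (k+1)" "finite A"
        using obtain_subset_with_card_n[of "min (card L) (k+1)" L] by auto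
      obtain B where B: "B \<subseteq> V - L" "card B = min (card (V - L)) (k+1)" "finite B"
        using obtain_subset_with_card_n[of "min (card (V - L)) (k+1)" "V - L"] by auto
      have disj: "A \<inter> B = {}" using A B by blast
      have cAB: "card (A \<union> B) = card A + card B" using card_Un_disjoint[OF A(3) B(3) disj] .
      have "card A + card B \<ge> k + s + 2"
        using A(2) B(2) F1 F2 csum assms(3,6)
        by (cases "card L \<le> k+1"; cases "card (V-L) \<le> k+1"; simp add: min_def)
      then have ge: "k + s + 2 \<le> card (A \<union> B)" using cAB by simp
      obtain S where S: "S \<subseteq> A \<union> B" "card S = k + s + 2"
        using obtain_subset_with_card_n[OF ge] by blast
      have "k_dense_set V E k (k + s + 2) S"
        unfolding k_dense_set_def k_sparse_def
      proof (intro conjI ballI)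
        show "card S = k + s + 2" by fact
        show "S \<subseteq> V" using S A B LV by blast
      next
        fix v assume vS: "v \<in> S"
        show "card {u \<in> S. compl_graph V E v u} \<le> k"
        proof (cases "v \<in> A")
          case True
          have "{u \<in> S. compl_graph V E v u} \<subseteq> A - {v}"
          proof
            fix u assume u: "u \<in> {u \<in> S. compl_graph V E v u}"
            then have "\<not> E v u" "u \<noteq> v" unfolding compl_graph_def by auto
            moreover have "u \<notin> B" using join True A B \<open>\<not> E v u\<close> by blast
            ultimately show "u \<in> A - {v}" using u S by blast
          qed
          then have "card {u \<in> S. compl_graph V E v u} \<le> card (A - {v})"
            using A(3) by (intro card_mono) auto
          also have "\<dots> \<le> k" using True A by simp
          finally show ?thesis .
        next
          case False
          then have vB: "v \<in> B" using vS S by blast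
          have "{u \<in> S. compl_graph V E v u} \<subseteq> B - {v}"
          proof
            fix u assume u: "u \<in> {u \<in> S. compl_graph V E v u}"
            then have "\<not> E v u" "u \<noteq> v" unfolding compl_graph_def by auto
            moreover have "u \<notin> A"
            proof
              assume "u \<in> A"
              then have "E u v" using join vB A B by blast
              then show False using sym \<open>\<not> E v u\<close> by blast
            qed
            ultimately show "u \<in> B - {v}" using u S by blast
          qed
          then have "card {u \<in> S. compl_graph V E v u} \<le> card (B - {v})"
            using B(3) by (intro card_mono) auto
          also have "\<dots> \<le> k" using vB B by simp
          finally show ?thesis .
        qed
      qed
      then show ?thesis using assms(7) by blast
    qed
  qed
qed

end
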